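(* Suppose that for every $y\in\mathcal Y$ the function $\phi(y,\cdot):\mathbb R\to[0,\infty)$ is convex and differentiable with $|\phi'(y,s)-\phi'(y,\tilde s)|\le L|s-\tilde s|$ for all $s,\tilde s\in\mathbb R$ (some $L>0$). Let $(f_t)_{t\in\mathbb N}$ be the online gradient descent iterates with step sizes satisfying $\eta_t\le 1/(6L\kappa^2)$ for all $t\in\mathbb N$, and assume $\mathcal E(f_1)\neq\mathcal E(f_H)$. If $\lim_{t\to\infty}\mathbb E[\mathcal E(f_t)]=\mathcal E(f_H)$, then $\sum_{t=1}^\infty\eta_t=\infty$.
   Context: Setting: Let $\mathcal X\subset\mathbb R^d$, $\mathcal Y\subset\mathbb R$, $\mathcal Z=\mathcal X\times\mathcal Y$, and let $\rho$ be a Borel probability measure on $\mathcal Z$. Let $K:\mathcal X\times\mathcal X\to\mathbb R$ be a continuous, symmetric, positive semi-definite kernel with reproducing kernel Hilbert space $H_K$ (inner product $\langle\cdot,\cdot\rangle$, norm $\|\cdot\|$), $K_x:=K(x,\cdot)$, reproducing property $f(x)=\langle f,K_x\rangle$, and $\kappa:=\sup_{x\in\mathcal X}\sqrt{K(x,x)}<\infty$. Let $\phi:\mathcal Y\times\mathbb R\to[0,\infty)$ be a loss function, differentiable in its second argument, and write $\phi'(y,s)$ for its derivative with respect to $s$. The generalization error of $f:\mathcal X\to\mathbb R$ is $\mathcal E(f)=\int_{\mathcal Z}\phi(y,f(x))\,d\rho(x,y)$. It is assumed that a minimizer $f_H\in\arg\min_{f\in H_K}\mathcal E(f)$ exists and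 that $\max\{\sup_{y\in\mathcal Y}\phi(y,0),\ \sup_{(x,y)\in\mathcal Z}\phi(y,f_H(x))\}<\infty$. Let $z_t=(x_t,y_t)$, $t\in\mathbb N$, be i.i.d. samples from $\rho$, let $(\eta_t)_{t\in\mathbb N}$ be positive step sizes, and define the online gradient descent iterates by $f_1=0$ and $f_{t+1}=f_t-\eta_t\phi'(y_t,f_t(x_t))K_{x_t}$ for $t\in\mathbb N$ (so $f_t$ depends only on $z_1,\dots,z_{t-1}$). *)

theory Defs
  imports "HOL-Probability.Probability"
begin

text \<open>The RKHS H_K is represented through a feature map Phi into a real Hilbert space 'h
  whose image of X spans a dense subspace, with K x x' = inner (Phi x) (Phi x').
  The element h of 'h corresponds to the function x \<mapsto> inner h (Phi x) of H_K,
  and Phi x corresponds to K_x.\<close>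

definition gen_err ::
  "('x \<times> real) measure \<Rightarrow> (real \<Rightarrow> real \<Rightarrow> real) \<Rightarrow> ('x \<Rightarrow> 'h::real_inner) \<Rightarrow> 'h \<Rightarrow> ennreal"
  where "gen_err \<rho> \<phi> \<Phi> h = (\<integral>\<^sup>+ z. ennreal (\<phi> (snd z) (inner h (\<Phi> (fst z)))) \<partial>\<rho>)"

text \<open>Online gradient descent iterates. ogd ... t \<omega> is f_t for t \<ge> 1 (ogd ... 0 \<omega> = 0 is
  an unused dummy); \<omega> t = (x_t, y_t) is the t-th sample (\<omega> 0 unused).
  f_1 = 0,  f_(t+1) = f_t - \<eta>_t \<phi>'(y_t, f_t(x_t)) K_(x_t).\<close>
fun ogd ::
  "(real \<Rightarrow> real \<Rightarrow> real) \<Rightarrow> ('x \<Rightarrow> 'h::real_inner) \<Rightarrow> (nat \<Rightarrow> real) \<Rightarrow> nat \<Rightarrow> (nat \<Rightarrow> 'x \<times> real) \<Rightarrow> 'h"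
  where
    "ogd \<phi> \<Phi> \<eta> 0 \<omega> = 0"
  | "ogd \<phi> \<Phi> \<eta> (Suc t) \<omega> =
       (if t = 0 then 0
        else ogd \<phi> \<Phi> \<eta> t \<omega>
             - (\<eta> t * deriv (\<phi> (snd (\<omega> t))) (inner (ogd \<phi> \<Phi> \<eta> t \<omega>) (\<Phi> (fst (\<omega> t)))))
               *\<^sub>R \<Phi> (fst (\<omega> t)))"

end

theory Submission
  imports Defs
begin


lemma deriv_has:
  fixes f :: "real \<Rightarrow> real"
  assumes "f differentiable (at s)"
  shows "(f has_real_derivative deriv f s) (at s)"
  using assms DERIV_deriv_iff_real_differentiable by blast

lemma tangent_ineq:
  fixes f :: "real \<Rightarrow> real"
  assumes cv: "convex_on UNIV f" and d: "\<forall>s. f differentiable (at s)"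
  shows "f s + deriv f s * d \<le> f (s + d)"
proof -
  have "f (s+d) - f s \<ge> deriv f s * ((s+d) - s)"
    by (rule convex_on_imp_above_tangent[OF cv]) (use d deriv_has in auto)
  then show ?thesis by simp
qed

lemma descent_ineq:
  fixes f :: "real \<Rightarrow> real"
  assumes d: "\<forall>s. f differentiable (at s)" and L: "L > 0"
    and lip: "\<forall>s s'. \<bar>deriv f s - deriv f s'\<bar> \<le> L * \<bar>s - s'\<bar>"
  shows "f (s + d) \<le> f s + deriv f s * d + L * d\<^sup>2"
proof -
  have D: "\<And>x. DERIV f x :> deriv f x" using d deriv_has by blast
  consider "d = 0" | "d > 0" | "d < 0" by linarith
  then show ?thesis
  proof cases
    case 1 then show ?thesis by simp
  next
    case 2
    obtain z where z: "s < z" "z < s + d" "f (s+d) - f s = (s + d - s) * deriv f z"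
      using MVT2[of s "s+d" f "deriv f"] 2 D by auto
    have "deriv f z * d - deriv f s * d \<le> \<bar>deriv f z - deriv f s\<bar> * d"
      using 2 by (metis abs_ge_self left_diff_distrib mult_right_mono less_imp_le)
    also have "\<dots> \<le> L * \<bar>z - s\<bar> * d" using lip 2 by (simp add: mult_right_mono)
    also have "\<dots> \<le> L * d * d" using z 2 L by (intro mult_right_mono mult_left_mono) auto
    finally show ?thesis using z by (simp add: power2_eq_square algebra_simps)
  next
    case 3
    obtain z where z: "s + d < z" "z < s" "f s - f (s+d) = (s - (s + d)) * deriv f z"
      using MVT2[of "s+d" s f "deriv f"] 3 D by auto
    have "deriv f z * d - deriv f s * d \<le> \<bar>deriv f z - deriv f s\<bar> * (-d)"
      using 3 by (smt (verit, best) abs_ge_self abs_minus_commute left_diff_distrib mult_minus_right mult_right_mono)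
    also have "\<dots> \<le> L * \<bar>z - s\<bar> * (-d)" using lip 3 by (simp add: mult_right_mono)
    also have "\<dots> \<le> L * (-d) * (-d)" using z 3 L by (intro mult_right_mono mult_left_mono) auto
    finally show ?thesis using z by (simp add: power2_eq_square algebra_simps)
  qed
qed

lemma deriv0_bound:
  fixes f :: "real \<Rightarrow> real"
  assumes d: "\<forall>s. f differentiable (at s)" and L: "L > 0"
    and lip: "\<forall>s s'. \<bar>deriv f s - deriv f s'\<bar> \<le> L * \<bar>s - s'\<bar>"
    and nn: "\<forall>s. 0 \<le> f s"
  shows "(deriv f s)\<^sup>2 \<le> 4 * L * f s"
proof -
  let ?g = "deriv f s"
  have "f (s + (- ?g/(2*L))) \<le> f s + ?g * (- ?g/(2*L)) + L * (- ?g/(2*L))\<^sup>2"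
    by (rule descent_ineq[OF d L lip])
  also have "\<dots> = f s - ?g\<^sup>2 / (4*L)" using L by (simp add: power2_eq_square field_simps)
  finally have "0 \<le> f s - ?g\<^sup>2 / (4*L)" using nn by (metis order_trans)
  then show ?thesis using L by (simp add: field_simps)
qed




lemma riesz:
  fixes l :: "'h::{real_inner,complete_space} \<Rightarrow> real"
  assumes bl: "bounded_linear l"
  shows "\<exists>g. \<forall>v. l v = inner v g"
proof -
  interpret bounded_linear l by fact
  obtain C where C: "\<And>v. norm (l v) \<le> norm v * C" "C > 0" using pos_bounded by blast
  define J where "J v = (norm v)\<^sup>2 / 2 - l v" for v
  have Jlow: "J v \<ge> - C\<^sup>2 / 2" for v
  proof -
    have "l v \<le> norm v * C" using C(1)[of v] by simp
    moreover have "(norm v - C)\<^sup>2 \<ge> 0" by simp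
    ultimately show ?thesis unfolding J_def by (simp add: power2_eq_square algebra_simps)
  qed
  define j where "j = Inf (range J)"
  have bdd: "bdd_below (range J)" using Jlow by (intro bdd_belowI[of _ "- C\<^sup>2 / 2"]) auto
  have "\<exists>v. J v < j + 1 / Suc n" for n
  proof -
    have "Inf (range J) < j + 1 / Suc n" unfolding j_def by simp
    then show ?thesis using cInf_less_iff[OF _ bdd] by auto
  qed
  then obtain v where v: "\<And>n. J (v n) < j + 1 / Suc n" by metis
  have jle: "j \<le> J w" for w unfolding j_def using bdd by (simp add: cInf_lower)
  have par: "(norm (a - b))\<^sup>2 = 4 * (J a + J b - 2 * J ((1/2) *\<^sub>R (a + b)))" for a b
  proof -
    have "l ((1/2) *\<^sub>R (a + b)) = (l a + l b) / 2" by (simp add: scaleR add)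
    moreover have "(norm ((1/2) *\<^sub>R (a + b)))\<^sup>2 = (norm (a+b))\<^sup>2 / 4"
      by (simp add: power2_eq_square)
    moreover have "(norm (a - b))\<^sup>2 + (norm (a + b))\<^sup>2 = 2 * (norm a)\<^sup>2 + 2 * (norm b)\<^sup>2"
      by (simp add: power2_norm_eq_inner inner_diff inner_add inner_commute)
    ultimately show ?thesis unfolding J_def by (simp add: algebra_simps)
  qed
  have cau: "Cauchy v"
  proof (rule metric_CauchyI)
    fix e :: real assume e: "e > 0"
    obtain N :: nat where N: "8 / e\<^sup>2 < N" using reals_Archimedean2 by blast
    have Npos: "N > 0" using N e by (metis gr0I of_nat_0 divide_pos_pos zero_less_numeral zero_less_power not_less_iff_gr_or_eq)
    show "\<exists>M. \<forall>m\<ge>M. \<forall>n\<ge>M. dist (v m) (v n) < e"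
    proof (intro exI allI impI)
      fix m n assume mn: "N \<le> m" "N \<le> n"
      have "1 / real (Suc m) \<le> 1 / N" using mn Npos by (simp add: frac_le)
      moreover have "1 / real (Suc n) \<le> 1 / N" using mn Npos by (simp add: frac_le)
      moreover have "j \<le> J ((1/2) *\<^sub>R (v m + v n))" by (rule jle)
      moreover have lin: "\<And>P a b c x y e1 e2 E. e1 \<le> E \<Longrightarrow> e2 \<le> E \<Longrightarrow> j \<le> c \<Longrightarrow> P = 4 * (a + b - 2 * c)
          \<Longrightarrow> a < j + e1 \<Longrightarrow> b < j + e2 \<Longrightarrow> P < 4 * (E + E)" by simp
      ultimately have "(norm (v m - v n))\<^sup>2 < 4 * (1 / N + 1 / N)"
        using par[of "v m" "v n"] v[of m] v[of n] by blast
      also have "\<dots> < e\<^sup>2" using N Npos e by (simp add: field_simps)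
      finally have "(norm (v m - v n))\<^sup>2 < e\<^sup>2" .
      then show "dist (v m) (v n) < e" using e by (simp add: dist_norm power_less_imp_less_base)
    qed
  qed
  then obtain g where g: "v \<longlonglongrightarrow> g" using Cauchy_convergent_iff convergent_def by blast
  have Jg: "J g \<le> J w" for w
  proof -
    have lim: "(\<lambda>n. J (v n)) \<longlonglongrightarrow> J g" unfolding J_def
      by (intro tendsto_intros g tendsto) auto
    have lim2: "(\<lambda>n. J w + 1 / Suc n) \<longlonglongrightarrow> J w + 0"
      by (intro tendsto_intros LIMSEQ_Suc[OF lim_inverse_n'] )
    show ?thesis
      by (rule LIMSEQ_le[OF lim lim2[simplified]]) (use v jle in \<open>auto intro!: exI[of _ 0] less_imp_le[OF less_le_trans[OF _ add_right_mono]]\<close>)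
  qed
  have "l w = inner w g" for w
  proof -
    define q where "q = inner g w - l w"
    define N where "N = (norm w)\<^sup>2"
    have N0: "N \<ge> 0" unfolding N_def by simp
    define r where "r = 1 / (N + 1)"
    have rpos: "r > 0" unfolding r_def using N0 by simp
    have rN: "r * N = 1 - r" unfolding r_def using N0 by (simp add: field_simps)
    define t where "t = - q * r"
    have "J g \<le> J (g + t *\<^sub>R w)" by (rule Jg)
    moreover have "J (g + t *\<^sub>R w) = J g + t * q + t\<^sup>2 * N / 2"
      unfolding J_def q_def N_def power2_norm_eq_inner
      by (simp add: add scaleR inner_add inner_commute power2_eq_square algebra_simps)
    ultimately have "0 \<le> t * q + t\<^sup>2 * N / 2" by simp
    moreover have "t\<^sup>2 * N / 2 = q\<^sup>2 * r * (r * N) / 2" by (simp add: t_def power2_eq_square)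
    moreover have "t * q = - (q\<^sup>2 * r)" by (simp add: t_def power2_eq_square)
    ultimately have "0 \<le> - (q\<^sup>2 * r) + q\<^sup>2 * r * (1 - r) / 2" by (simp only: rN)
    then have "0 \<le> - (q\<^sup>2 * r) * (1 + r)" by (simp add: algebra_simps)
    then have "q\<^sup>2 * r * (1 + r) \<le> 0" by simp
    moreover have "q\<^sup>2 * r * (1 + r) \<ge> 0" using rpos by simp
    ultimately have "q\<^sup>2 * r * (1 + r) = 0" by linarith
    then have "q = 0" using rpos by simp
    then show ?thesis unfolding q_def by (simp add: inner_commute)
  qed
  then show ?thesis by blast
qed




lemma deriv_meas:
  fixes \<phi> :: "real \<Rightarrow> real \<Rightarrow> real"
  assumes phi_meas: "(\<lambda>(y, s). \<phi> y s) \<in> borel_measurable borel"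
    and f: "f \<in> borel_measurable M" and g: "g \<in> borel_measurable M"
    and d: "\<And>m. m \<in> space M \<Longrightarrow> \<phi> (f m) differentiable (at (g m))"
  shows "(\<lambda>m. deriv (\<phi> (f m)) (g m)) \<in> borel_measurable M"
proof (rule borel_measurable_LIMSEQ_real)
  have pm: "(\<lambda>p. \<phi> (fst p) (snd p)) \<in> borel_measurable (borel \<Otimes>\<^sub>M borel)"
    using phi_meas by (simp add: borel_prod split_beta')
  have comp: "(\<lambda>m. \<phi> (f m) (a m)) \<in> borel_measurable M" if "a \<in> borel_measurable M" for a
    using measurable_compose[OF measurable_Pair[OF f that] pm] by simp
  show "(\<lambda>m. (\<phi> (f m) (g m + 1 / Suc i) - \<phi> (f m) (g m)) / (1 / Suc i)) \<in> borel_measurable M" for i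
    by (intro borel_measurable_divide borel_measurable_diff comp g borel_measurable_add) auto
  fix m assume m: "m \<in> space M"
  have "DERIV (\<phi> (f m)) (g m) :> deriv (\<phi> (f m)) (g m)"
    using d[OF m] DERIV_deriv_iff_real_differentiable by blast
  then have lim: "((\<lambda>h. (\<phi> (f m) (g m + h) - \<phi> (f m) (g m)) / h) \<longlongrightarrow> deriv (\<phi> (f m)) (g m)) (at 0)"
    by (simp add: DERIV_def)
  have seq: "filterlim (\<lambda>i::nat. 1 / real (Suc i)) (at 0) sequentially"
  proof -
    have "(\<lambda>i. 1 / real (Suc i)) \<longlonglongrightarrow> 0"
      using LIMSEQ_inverse_real_of_nat by (simp add: inverse_eq_divide)
    then show ?thesis unfolding filterlim_at by auto
  qed
  show "(\<lambda>i. (\<phi> (f m) (g m + 1 / Suc i) - \<phi> (f m) (g m)) / (1 / Suc i)) \<longlonglongrightarrow> deriv (\<phi> (f m)) (g m)"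
    using filterlim_compose[OF lim seq] by simp
qed




locale setting =
  fixes X :: "'x::topological_space set" and Y :: "real set"
    and \<rho> :: "('x \<times> real) measure"
    and \<Phi> :: "'x \<Rightarrow> 'h::{real_inner, complete_space}"
    and \<phi> :: "real \<Rightarrow> real \<Rightarrow> real" and L \<kappa> B :: real
  assumes prob: "prob_space \<rho>"
    and spc: "space \<rho> = X \<times> Y"
    and sts: "sets \<rho> = sets (restrict_space borel (X \<times> Y))"
    and Phi_cont: "continuous_on X \<Phi>"
    and Phi_bnd: "\<forall>x\<in>X. norm (\<Phi> x) \<le> \<kappa>"
    and kpos: "\<kappa> > 0"
    and phi_meas: "(\<lambda>(y, s). \<phi> y s) \<in> borel_measurable borel"
    and phi_nonneg: "\<forall>y\<in>Y. \<forall>s. 0 \<le> \<phi> y s"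
    and phi_diff: "\<forall>y\<in>Y. \<forall>s. \<phi> y differentiable (at s)"
    and phi_convex: "\<forall>y\<in>Y. convex_on UNIV (\<phi> y)"
    and L_pos: "L > 0"
    and phi_lip: "\<forall>y\<in>Y. \<forall>s s'. \<bar>deriv (\<phi> y) s - deriv (\<phi> y) s'\<bar> \<le> L * \<bar>s - s'\<bar>"
    and phiB: "\<forall>y\<in>Y. \<phi> y 0 \<le> B"
begin

interpretation P: prob_space \<rho> by (rule prob)

definition "sv h z = inner h (\<Phi> (fst z))"
definition "av h z = deriv (\<phi> (snd z)) (sv h z)"
definition "Fr h = (\<integral>z. \<phi> (snd z) (sv h z) \<partial>\<rho>)"
definition "ell h v = (\<integral>z. av h z * inner v (\<Phi> (fst z)) \<partial>\<rho>)"
definition "G0 = sqrt (4 * L * B)"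

lemma meas_cont: "continuous_on (X \<times> Y) f \<Longrightarrow> (f :: _ \<Rightarrow> real) \<in> borel_measurable \<rho>"
  using borel_measurable_continuous_on_restrict[of "X \<times> Y" f] sts by (simp cong: measurable_cong_sets)

lemma meas_inner: "(\<lambda>z. inner v (\<Phi> (fst z))) \<in> borel_measurable \<rho>"
  by (rule meas_cont) (intro continuous_on_inner continuous_on_const continuous_on_compose2[OF Phi_cont] continuous_on_fst continuous_on_id; auto)

lemma meas_snd: "(\<lambda>z. snd z) \<in> borel_measurable \<rho>"
  by (rule meas_cont) (intro continuous_on_snd continuous_on_id)

lemma meas_phi: "f \<in> borel_measurable M \<Longrightarrow> g \<in> borel_measurable M \<Longrightarrow> (\<lambda>m. \<phi> (f m) (g m)) \<in> borel_measurable M"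
proof -
  assume f: "f \<in> borel_measurable M" and g: "g \<in> borel_measurable M"
  have pm: "(\<lambda>p. \<phi> (fst p) (snd p)) \<in> borel_measurable (borel \<Otimes>\<^sub>M borel)"
    using phi_meas by (simp add: borel_prod split_beta')
  show ?thesis using measurable_compose[OF measurable_Pair[OF f g] pm] by simp
qed

lemma sv_meas: "sv h \<in> borel_measurable \<rho>"
  unfolding sv_def by (rule meas_inner)

lemma in_space: "z \<in> space \<rho> \<Longrightarrow> fst z \<in> X \<and> snd z \<in> Y"
  using spc by (metis mem_Times_iff)

lemma av_meas: "av h \<in> borel_measurable \<rho>"
  unfolding av_def
  by (rule deriv_meas[OF phi_meas meas_snd sv_meas]) (use phi_diff in_space in blast)

lemma sv_bnd: "z \<in> space \<rho> \<Longrightarrow> \<bar>sv h z\<bar> \<le> norm h * \<kappa>"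
proof -
  assume z: "z \<in> space \<rho>"
  have "\<bar>sv h z\<bar> \<le> norm h * norm (\<Phi> (fst z))" unfolding sv_def by (rule Cauchy_Schwarz_ineq2)
  also have "\<dots> \<le> norm h * \<kappa>" using Phi_bnd in_space[OF z] by (simp add: mult_left_mono)
  finally show ?thesis .
qed

lemma inner_bnd: "z \<in> space \<rho> \<Longrightarrow> \<bar>inner v (\<Phi> (fst z))\<bar> \<le> norm v * \<kappa>"
  using sv_bnd[of z v] by (simp add: sv_def)

lemma d0_bnd: "y \<in> Y \<Longrightarrow> \<bar>deriv (\<phi> y) 0\<bar> \<le> G0"
proof -
  assume y: "y \<in> Y"
  have "(deriv (\<phi> y) 0)\<^sup>2 \<le> 4 * L * \<phi> y 0"
    by (rule deriv0_bound) (use y phi_diff phi_lip phi_nonneg L_pos in auto)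
  also have "\<dots> \<le> 4 * L * B" using phiB y L_pos by simp
  finally have "sqrt ((deriv (\<phi> y) 0)\<^sup>2) \<le> sqrt (4 * L * B)" by (rule real_sqrt_le_mono)
  then show ?thesis by (simp add: G0_def)
qed

lemma av_bnd: "z \<in> space \<rho> \<Longrightarrow> \<bar>av h z\<bar> \<le> G0 + L * (norm h * \<kappa>)"
proof -
  assume z: "z \<in> space \<rho>"
  have y: "snd z \<in> Y" using in_space[OF z] by simp
  have "\<bar>av h z - deriv (\<phi> (snd z)) 0\<bar> \<le> L * \<bar>sv h z - 0\<bar>"
    unfolding av_def using phi_lip y by blast
  then have "\<bar>av h z\<bar> \<le> \<bar>deriv (\<phi> (snd z)) 0\<bar> + L * \<bar>sv h z\<bar>" by simp
  also have "\<dots> \<le> G0 + L * (norm h * \<kappa>)"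
    using d0_bnd[OF y] sv_bnd[OF z, of h] L_pos by (intro add_mono mult_left_mono) auto
  finally show ?thesis .
qed

lemma phi_bnd: "z \<in> space \<rho> \<Longrightarrow> \<bar>\<phi> (snd z) s\<bar> \<le> B + G0 * \<bar>s\<bar> + L * s\<^sup>2"
proof -
  assume z: "z \<in> space \<rho>"
  have y: "snd z \<in> Y" using in_space[OF z] by simp
  have "\<phi> (snd z) (0 + s) \<le> \<phi> (snd z) 0 + deriv (\<phi> (snd z)) 0 * s + L * s\<^sup>2"
    by (rule descent_ineq) (use y phi_diff phi_lip L_pos in auto)
  moreover have "deriv (\<phi> (snd z)) 0 * s \<le> G0 * \<bar>s\<bar>"
    using d0_bnd[OF y] by (metis abs_ge_self abs_mult abs_ge_zero mult_right_mono order_trans)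
  ultimately show ?thesis using phiB y phi_nonneg by fastforce
qed

lemma integrable_bnd:
  fixes f :: "_ \<Rightarrow> real"
  shows "f \<in> borel_measurable \<rho> \<Longrightarrow> (\<And>z. z \<in> space \<rho> \<Longrightarrow> \<bar>f z\<bar> \<le> C) \<Longrightarrow> integrable \<rho> f"
  by (rule P.integrable_const_bound[where B=C]) auto

lemma phi_sv_meas: "(\<lambda>z. \<phi> (snd z) (sv h z)) \<in> borel_measurable \<rho>"
  by (rule meas_phi[OF meas_snd sv_meas])

lemma phi_sv_int: "integrable \<rho> (\<lambda>z. \<phi> (snd z) (sv h z))"
proof (rule integrable_bnd[OF phi_sv_meas])
  fix z assume z: "z \<in> space \<rho>"
  have s: "\<bar>sv h z\<bar> \<le> norm h * \<kappa>" by (rule sv_bnd[OF z])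
  have G0: "G0 \<ge> 0" using d0_bnd in_space[OF z] by (meson abs_ge_zero order_trans)
  have "\<bar>\<phi> (snd z) (sv h z)\<bar> \<le> B + G0 * \<bar>sv h z\<bar> + L * (sv h z)\<^sup>2" by (rule phi_bnd[OF z])
  also have "\<dots> \<le> B + G0 * (norm h * \<kappa>) + L * (norm h * \<kappa>)\<^sup>2"
  proof -
    have "(sv h z)\<^sup>2 \<le> (norm h * \<kappa>)\<^sup>2"
      using s kpos by (metis abs_le_square_iff abs_of_nonneg mult_nonneg_nonneg norm_ge_zero less_imp_le)
    then show ?thesis using s G0 L_pos by (intro add_mono mult_left_mono order_refl) auto
  qed
  finally show "\<bar>\<phi> (snd z) (sv h z)\<bar> \<le> B + G0 * (norm h * \<kappa>) + L * (norm h * \<kappa>)\<^sup>2" .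
qed

lemma gen_err_Fr: "gen_err \<rho> \<phi> \<Phi> h = ennreal (Fr h)"
  unfolding gen_err_def Fr_def
  using phi_sv_int[of h] phi_nonneg in_space
  by (subst nn_integral_eq_integral) (auto simp: sv_def)

lemma Fr_nonneg: "Fr h \<ge> 0"
  unfolding Fr_def using phi_nonneg in_space by (intro integral_nonneg_AE) auto

lemma G0_nonneg: "G0 \<ge> 0"
  unfolding G0_def using L_pos phiB phi_nonneg in_space P.not_empty
  by (metis (no_types, lifting) all_not_in_conv mult_nonneg_nonneg order_trans real_sqrt_ge_zero zero_le_numeral less_imp_le)

lemma avb_nonneg: "0 \<le> G0 + L * (norm h * \<kappa>)"
  using G0_nonneg L_pos kpos by simp

lemma av_inner_int: "integrable \<rho> (\<lambda>z. av h z * inner v (\<Phi> (fst z)))"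
proof (rule integrable_bnd)
  show "(\<lambda>z. av h z * inner v (\<Phi> (fst z))) \<in> borel_measurable \<rho>"
    using av_meas meas_inner by measurable
  fix z assume z: "z \<in> space \<rho>"
  show "\<bar>av h z * inner v (\<Phi> (fst z))\<bar> \<le> (G0 + L * (norm h * \<kappa>)) * (norm v * \<kappa>)"
    unfolding abs_mult using av_bnd[OF z] inner_bnd[OF z] avb_nonneg by (intro mult_mono) auto
qed

lemma ell_bl: "bounded_linear (ell h)"
proof (rule bounded_linear_intro)
  show "ell h (v + w) = ell h v + ell h w" for v w
    unfolding ell_def by (simp add: inner_add_left distrib_left av_inner_int)
  show "ell h (r *\<^sub>R v) = r *\<^sub>R ell h v" for r v
    unfolding ell_def by (simp add: algebra_simps)
  show "norm (ell h v) \<le> norm v * ((G0 + L * (norm h * \<kappa>)) * \<kappa>)" for v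
  proof -
    have "norm (ell h v) \<le> (\<integral>z. norm (av h z * inner v (\<Phi> (fst z))) \<partial>\<rho>)"
      unfolding ell_def by (rule integral_norm_bound)
    also have "\<dots> \<le> (\<integral>z. (G0 + L * (norm h * \<kappa>)) * (norm v * \<kappa>) \<partial>\<rho>)"
      using av_bnd inner_bnd avb_nonneg
      by (intro integral_mono integrable_norm av_inner_int) (auto simp: abs_mult intro!: mult_mono)
    finally show ?thesis by (simp add: algebra_simps P.prob_space)
  qed
qed

definition "gr h = (SOME g. \<forall>v. ell h v = inner v g)"

lemma gr: "ell h v = inner v (gr h)"
  using someI_ex[OF riesz[OF ell_bl[of h]]] unfolding gr_def by blast

lemma int_split: "(\<integral>z. \<phi> (snd z) (sv h z) - c * (av h z * inner v (\<Phi> (fst z))) + e \<partial>\<rho>) = Fr h - c * ell h v + e"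
proof -
  have "(\<integral>z. \<phi> (snd z) (sv h z) - c * (av h z * inner v (\<Phi> (fst z))) + e \<partial>\<rho>)
      = (\<integral>z. \<phi> (snd z) (sv h z) - c * (av h z * inner v (\<Phi> (fst z))) \<partial>\<rho>) + (\<integral>z. e \<partial>\<rho>)"
    by (intro Bochner_Integration.integral_add) (auto intro!: Bochner_Integration.integrable_diff phi_sv_int av_inner_int)
  also have "(\<integral>z. \<phi> (snd z) (sv h z) - c * (av h z * inner v (\<Phi> (fst z))) \<partial>\<rho>)
      = Fr h - (\<integral>z. c * (av h z * inner v (\<Phi> (fst z))) \<partial>\<rho>)"
    unfolding Fr_def by (intro Bochner_Integration.integral_diff) (auto intro!: phi_sv_int av_inner_int)
  finally show ?thesis by (simp add: ell_def P.prob_space)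
qed

lemma grad_bound:
  assumes hmin: "\<forall>h'. Fr hm \<le> Fr h'"
  shows "(norm (gr h))\<^sup>2 \<le> 4 * L * \<kappa>\<^sup>2 * (Fr h - Fr hm)"
proof -
  define g where "g = gr h"
  define \<gamma> where "\<gamma> = 1 / (2 * L * \<kappa>\<^sup>2)"
  have \<gamma>pos: "\<gamma> > 0" unfolding \<gamma>_def using L_pos kpos by simp
  define w where "w = h - \<gamma> *\<^sub>R g"
  have pw: "\<phi> (snd z) (sv w z) \<le> \<phi> (snd z) (sv h z) - \<gamma> * (av h z * inner g (\<Phi> (fst z))) + L * \<gamma>\<^sup>2 * (norm g)\<^sup>2 * \<kappa>\<^sup>2"
    if z: "z \<in> space \<rho>" for z
  proof -
    define d where "d = - \<gamma> * inner g (\<Phi> (fst z))"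
    have y: "snd z \<in> Y" using in_space[OF z] by simp
    have "sv w z = sv h z + d" unfolding sv_def w_def d_def by (simp add: inner_diff_left)
    moreover have "\<phi> (snd z) (sv h z + d) \<le> \<phi> (snd z) (sv h z) + deriv (\<phi> (snd z)) (sv h z) * d + L * d\<^sup>2"
      by (rule descent_ineq) (use y phi_diff phi_lip L_pos in auto)
    moreover have "d\<^sup>2 \<le> \<gamma>\<^sup>2 * ((norm g)\<^sup>2 * \<kappa>\<^sup>2)"
    proof -
      have "d\<^sup>2 = \<gamma>\<^sup>2 * \<bar>inner g (\<Phi> (fst z))\<bar>\<^sup>2" unfolding d_def by (simp add: power_mult_distrib)
      also have "\<dots> \<le> \<gamma>\<^sup>2 * (norm g * \<kappa>)\<^sup>2"
        using inner_bnd[OF z, of g] by (intro mult_left_mono power_mono) auto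
      finally show ?thesis by (simp add: power_mult_distrib)
    qed
    ultimately have a: "\<phi> (snd z) (sv w z) \<le> \<phi> (snd z) (sv h z) + av h z * d + L * d\<^sup>2"
      unfolding av_def by simp
    have b: "L * d\<^sup>2 \<le> L * (\<gamma>\<^sup>2 * ((norm g)\<^sup>2 * \<kappa>\<^sup>2))"
      using \<open>d\<^sup>2 \<le> _\<close> L_pos by (intro mult_left_mono) auto
    have c: "av h z * d = - \<gamma> * (av h z * inner g (\<Phi> (fst z)))" unfolding d_def by simp
    show ?thesis using a b c by (simp add: mult.assoc)
  qed
  have "Fr w \<le> (\<integral>z. \<phi> (snd z) (sv h z) - \<gamma> * (av h z * inner g (\<Phi> (fst z))) + L * \<gamma>\<^sup>2 * (norm g)\<^sup>2 * \<kappa>\<^sup>2 \<partial>\<rho>)"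
    unfolding Fr_def using pw
    by (intro integral_mono phi_sv_int Bochner_Integration.integrable_add Bochner_Integration.integrable_diff
          integrable_mult_right av_inner_int) auto
  also have "\<dots> = Fr h - \<gamma> * ell h g + L * \<gamma>\<^sup>2 * (norm g)\<^sup>2 * \<kappa>\<^sup>2" by (rule int_split)
  also have "ell h g = (norm g)\<^sup>2" unfolding g_def gr by (simp add: power2_norm_eq_inner)
  finally have "Fr hm \<le> Fr h - \<gamma> * (norm g)\<^sup>2 + L * \<gamma>\<^sup>2 * (norm g)\<^sup>2 * \<kappa>\<^sup>2"
    using hmin by (meson order_trans)
  moreover have "- \<gamma> * (norm g)\<^sup>2 + L * \<gamma>\<^sup>2 * (norm g)\<^sup>2 * \<kappa>\<^sup>2 = - (norm g)\<^sup>2 / (4 * L * \<kappa>\<^sup>2)"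
    unfolding \<gamma>_def using L_pos kpos by (simp add: field_simps power2_eq_square)
  ultimately have "(norm g)\<^sup>2 / (4 * L * \<kappa>\<^sup>2) \<le> Fr h - Fr hm" by linarith
  then show ?thesis unfolding g_def using L_pos kpos by (simp add: field_simps)
qed

lemma ennreal_integral_le:
  fixes f :: "_ \<Rightarrow> real"
  assumes "integrable M f"
  shows "ennreal (integral\<^sup>L M f) \<le> (\<integral>\<^sup>+ x. ennreal (f x) \<partial>M)"
proof -
  have i: "integrable M (\<lambda>x. max (f x) 0)" using assms by auto
  have "integral\<^sup>L M f \<le> (\<integral>x. max (f x) 0 \<partial>M)"
    using assms i by (intro integral_mono) auto
  then have "ennreal (integral\<^sup>L M f) \<le> ennreal (\<integral>x. max (f x) 0 \<partial>M)" by (rule ennreal_leI)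
  also have "\<dots> = (\<integral>\<^sup>+ x. ennreal (max (f x) 0) \<partial>M)"
    using i by (subst nn_integral_eq_integral) auto
  also have "\<dots> = (\<integral>\<^sup>+ x. ennreal (f x) \<partial>M)"
    by (intro nn_integral_cong) (simp add: ennreal_max_0)
  finally show ?thesis .
qed

lemma Fr_step: "z' \<in> space \<rho> \<Longrightarrow> Fr h - c * ell h (\<Phi> (fst z')) \<le> Fr (h - c *\<^sub>R \<Phi> (fst z'))"
proof -
  assume z': "z' \<in> space \<rho>"
  have pw: "\<phi> (snd z) (sv h z) - c * (av h z * inner (\<Phi> (fst z')) (\<Phi> (fst z))) + 0
      \<le> \<phi> (snd z) (sv (h - c *\<^sub>R \<Phi> (fst z')) z)" if z: "z \<in> space \<rho>" for z
  proof -
    have y: "snd z \<in> Y" using in_space[OF z] by simp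
    have "\<phi> (snd z) (sv h z) + deriv (\<phi> (snd z)) (sv h z) * (- c * inner (\<Phi> (fst z')) (\<Phi> (fst z)))
       \<le> \<phi> (snd z) (sv h z + (- c * inner (\<Phi> (fst z')) (\<Phi> (fst z))))"
      by (rule tangent_ineq) (use y phi_diff phi_convex in auto)
    then show ?thesis unfolding av_def sv_def by (simp add: inner_diff_left algebra_simps)
  qed
  have "Fr h - c * ell h (\<Phi> (fst z')) + 0 = (\<integral>z. \<phi> (snd z) (sv h z) - c * (av h z * inner (\<Phi> (fst z')) (\<Phi> (fst z))) + 0 \<partial>\<rho>)"
    by (rule int_split[symmetric])
  also have "\<dots> \<le> Fr (h - c *\<^sub>R \<Phi> (fst z'))"
    unfolding Fr_def using pw
    by (intro integral_mono phi_sv_int Bochner_Integration.integrable_add Bochner_Integration.integrable_diff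
          integrable_mult_right av_inner_int) auto
  finally show ?thesis by simp
qed

lemma step_lower:
  assumes hmin: "\<forall>h'. Fr hm \<le> Fr h'" and eta: "0 \<le> \<eta>"
  shows "ennreal ((1 - 4 * L * \<kappa>\<^sup>2 * \<eta>) * Fr h + 4 * L * \<kappa>\<^sup>2 * \<eta> * Fr hm)
     \<le> (\<integral>\<^sup>+ z'. gen_err \<rho> \<phi> \<Phi> (h - (\<eta> * av h z') *\<^sub>R \<Phi> (fst z')) \<partial>\<rho>)"
proof -
  define g where "g = gr h"
  define w where "w z' = Fr h - \<eta> * (av h z' * inner g (\<Phi> (fst z')))" for z'
  have wint: "integrable \<rho> w" unfolding w_def
    by (intro Bochner_Integration.integrable_diff integrable_mult_right av_inner_int) auto
  have "(1 - 4 * L * \<kappa>\<^sup>2 * \<eta>) * Fr h + 4 * L * \<kappa>\<^sup>2 * \<eta> * Fr hm \<le> Fr h - \<eta> * (norm g)\<^sup>2"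
  proof -
    have "\<eta> * (norm g)\<^sup>2 \<le> \<eta> * (4 * L * \<kappa>\<^sup>2 * (Fr h - Fr hm))"
      unfolding g_def using grad_bound[OF hmin] eta by (rule mult_left_mono)
    then show ?thesis by (simp add: algebra_simps)
  qed
  also have "Fr h - \<eta> * (norm g)\<^sup>2 = integral\<^sup>L \<rho> w"
  proof -
    have "integral\<^sup>L \<rho> w = (\<integral>z. Fr h \<partial>\<rho>) - (\<integral>z. \<eta> * (av h z * inner g (\<Phi> (fst z))) \<partial>\<rho>)"
      unfolding w_def by (intro Bochner_Integration.integral_diff integrable_mult_right av_inner_int) auto
    also have "\<dots> = Fr h - \<eta> * ell h g" by (simp add: ell_def P.prob_space)
    also have "ell h g = (norm g)\<^sup>2" unfolding g_def gr by (simp add: power2_norm_eq_inner)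
    finally show ?thesis by simp
  qed
  finally have "ennreal ((1 - 4 * L * \<kappa>\<^sup>2 * \<eta>) * Fr h + 4 * L * \<kappa>\<^sup>2 * \<eta> * Fr hm) \<le> ennreal (integral\<^sup>L \<rho> w)"
    by (rule ennreal_leI)
  also have "\<dots> \<le> (\<integral>\<^sup>+ z'. ennreal (w z') \<partial>\<rho>)" by (rule ennreal_integral_le[OF wint])
  also have "\<dots> \<le> (\<integral>\<^sup>+ z'. gen_err \<rho> \<phi> \<Phi> (h - (\<eta> * av h z') *\<^sub>R \<Phi> (fst z')) \<partial>\<rho>)"
  proof (rule nn_integral_mono)
    fix z' assume z': "z' \<in> space \<rho>"
    have "w z' = Fr h - (\<eta> * av h z') * ell h (\<Phi> (fst z'))"
      unfolding w_def g_def gr by (simp add: inner_commute)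
    also have "\<dots> \<le> Fr (h - (\<eta> * av h z') *\<^sub>R \<Phi> (fst z'))" by (rule Fr_step[OF z'])
    finally show "ennreal (w z') \<le> gen_err \<rho> \<phi> \<Phi> (h - (\<eta> * av h z') *\<^sub>R \<Phi> (fst z'))"
      unfolding gen_err_Fr by (rule ennreal_leI)
  qed
  finally show ?thesis .
qed

end



locale setting2 = setting X Y \<rho> \<Phi> \<phi> L \<kappa> B
  for X :: "'x::second_countable_topology set" and Y \<rho> and \<Phi> :: "'x \<Rightarrow> 'h::{real_inner, complete_space}" and \<phi> L \<kappa> B +
  fixes \<eta> :: "nat \<Rightarrow> real"
begin

interpretation P: prob_space \<rho> by (rule prob)

abbreviation "\<mu> \<equiv> PiM UNIV (\<lambda>_::nat. \<rho>)"

interpretation PS: product_prob_space "\<lambda>_::nat. \<rho>" UNIV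
  by (simp add: product_prob_space_def product_sigma_finite_def prob P.sigma_finite_measure
      product_prob_space_axioms_def)

lemma fst_meas: "fst \<in> measurable \<rho> borel"
proof -
  have "fst \<in> measurable (restrict_space borel (X \<times> Y)) (borel :: 'x measure)"
    by (rule borel_measurable_continuous_on_restrict) (intro continuous_on_fst continuous_on_id)
  then show ?thesis using sts by (simp cong: measurable_cong_sets)
qed

lemma K_meas:
  assumes a: "a \<in> measurable N \<rho>" and b: "b \<in> measurable N \<rho>"
  shows "(\<lambda>p. inner (\<Phi> (fst (a p))) (\<Phi> (fst (b p)))) \<in> borel_measurable N"
proof -
  have f1: "(\<lambda>p. (fst (a p), fst (b p))) \<in> measurable N (restrict_space borel (X \<times> X))"
  proof (rule measurable_restrict_space2)
    show "(\<lambda>p. (fst (a p), fst (b p))) \<in> space N \<rightarrow> X \<times> X"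
      using measurable_space[OF a] measurable_space[OF b] in_space by auto
    have "(\<lambda>p. (fst (a p), fst (b p))) \<in> measurable N (borel \<Otimes>\<^sub>M borel)"
      by (intro measurable_Pair measurable_compose[OF a fst_meas] measurable_compose[OF b fst_meas])
    then show "(\<lambda>p. (fst (a p), fst (b p))) \<in> measurable N borel"
      by (simp add: borel_prod)
  qed
  have k: "(\<lambda>q. inner (\<Phi> (fst q)) (\<Phi> (snd q))) \<in> borel_measurable (restrict_space borel (X \<times> X))"
    by (rule borel_measurable_continuous_on_restrict)
       (intro continuous_on_inner continuous_on_compose2[OF Phi_cont] continuous_on_fst continuous_on_snd continuous_on_id; auto)
  show ?thesis using measurable_compose[OF f1 k] by simp
qed

lemma comp_meas: "i \<in> UNIV \<Longrightarrow> (\<lambda>p. fst p i) \<in> measurable (\<mu> \<Otimes>\<^sub>M \<rho>) \<rho>"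
  by (rule measurable_compose[OF measurable_fst measurable_component_singleton]) simp

lemma space_mu: "\<omega> \<in> space \<mu> \<Longrightarrow> \<omega> i \<in> space \<rho>"
  by (auto simp: space_PiM)

lemma V_meas: "(\<lambda>p. inner (ogd \<phi> \<Phi> \<eta> t (fst p)) (\<Phi> (fst (snd p)))) \<in> borel_measurable (\<mu> \<Otimes>\<^sub>M \<rho>)"
proof (induction t)
  case 0 then show ?case by simp
next
  case (Suc t)
  show ?case
  proof (cases "t = 0")
    case True then show ?thesis by simp
  next
    case False
    let ?V = "\<lambda>p. inner (ogd \<phi> \<Phi> \<eta> t (fst p)) (\<Phi> (fst (snd p)))"
    have sh: "(\<lambda>p. (fst p, fst p t)) \<in> measurable (\<mu> \<Otimes>\<^sub>M \<rho>) (\<mu> \<Otimes>\<^sub>M \<rho>)"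
      by (intro measurable_Pair measurable_fst comp_meas) simp
    have Vt: "(\<lambda>p. ?V (fst p, fst p t)) \<in> borel_measurable (\<mu> \<Otimes>\<^sub>M \<rho>)"
      using measurable_compose[OF sh Suc.IH] by simp
    have yt: "(\<lambda>p. snd (fst p t)) \<in> borel_measurable (\<mu> \<Otimes>\<^sub>M \<rho>)"
      using measurable_compose[OF comp_meas meas_snd] by simp
    have D: "(\<lambda>p. deriv (\<phi> (snd (fst p t))) (?V (fst p, fst p t))) \<in> borel_measurable (\<mu> \<Otimes>\<^sub>M \<rho>)"
    proof (rule deriv_meas[OF phi_meas yt Vt])
      fix p assume "p \<in> space (\<mu> \<Otimes>\<^sub>M \<rho>)"
      then have "fst p \<in> space \<mu>" by (auto simp: space_pair_measure)
      then have "fst p t \<in> space \<rho>" by (rule space_mu)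
      then have "snd (fst p t) \<in> Y" using in_space by blast
      then show "\<phi> (snd (fst p t)) differentiable (at (?V (fst p, fst p t)))" using phi_diff by blast
    qed
    have Kt: "(\<lambda>p. inner (\<Phi> (fst (fst p t))) (\<Phi> (fst (snd p)))) \<in> borel_measurable (\<mu> \<Otimes>\<^sub>M \<rho>)"
      by (rule K_meas[OF comp_meas measurable_snd]) simp
    have eq: "inner (ogd \<phi> \<Phi> \<eta> (Suc t) (fst p)) (\<Phi> (fst (snd p))) =
      ?V p - \<eta> t * deriv (\<phi> (snd (fst p t))) (?V (fst p, fst p t)) * inner (\<Phi> (fst (fst p t))) (\<Phi> (fst (snd p)))" for p
      using False by (simp add: inner_diff_left)
    show ?thesis unfolding eq using Suc.IH D Kt by measurable
  qed
qed

lemma E_meas: "(\<lambda>\<omega>. gen_err \<rho> \<phi> \<Phi> (ogd \<phi> \<Phi> \<eta> t \<omega>)) \<in> borel_measurable \<mu>"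
  unfolding gen_err_def
proof (rule P.borel_measurable_nn_integral)
  have "(\<lambda>p. \<phi> (snd (snd p)) (inner (ogd \<phi> \<Phi> \<eta> t (fst p)) (\<Phi> (fst (snd p))))) \<in> borel_measurable (\<mu> \<Otimes>\<^sub>M \<rho>)"
    by (rule meas_phi[OF measurable_compose[OF measurable_snd meas_snd] V_meas])
  then show "(\<lambda>(x, y). ennreal (\<phi> (snd y) (inner (ogd \<phi> \<Phi> \<eta> t x) (\<Phi> (fst y))))) \<in> borel_measurable (\<mu> \<Otimes>\<^sub>M \<rho>)"
    by (simp add: split_beta')
qed

lemma ogd_local: "(\<forall>s<t. \<omega> s = \<omega>' s) \<Longrightarrow> ogd \<phi> \<Phi> \<eta> t \<omega> = ogd \<phi> \<Phi> \<eta> t \<omega>'"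
  by (induction t) auto

lemma ogd_upd: "t \<noteq> 0 \<Longrightarrow> ogd \<phi> \<Phi> \<eta> (Suc t) (fun_upd \<omega> t z) = ogd \<phi> \<Phi> \<eta> t \<omega> - (\<eta> t * av (ogd \<phi> \<Phi> \<eta> t \<omega>) z) *\<^sub>R \<Phi> (fst z)"
proof -
  assume t: "t \<noteq> 0"
  have "ogd \<phi> \<Phi> \<eta> t (fun_upd \<omega> t z) = ogd \<phi> \<Phi> \<eta> t \<omega>" by (rule ogd_local) auto
  then show ?thesis using t by (simp add: av_def sv_def)
qed

definition "EE t = (\<integral>\<^sup>+ \<omega>. gen_err \<rho> \<phi> \<Phi> (ogd \<phi> \<Phi> \<eta> t \<omega>) \<partial>\<mu>)"

lemma mu_prob: "prob_space \<mu>" by (rule prob_space_PiM) (rule prob)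

lemma E_step:
  assumes hmin: "\<forall>h'. Fr hm \<le> Fr h'" and eta: "0 \<le> \<eta> t" "4 * L * \<kappa>\<^sup>2 * \<eta> t \<le> 1" and t: "t \<noteq> 0"
  shows "ennreal (1 - 4 * L * \<kappa>\<^sup>2 * \<eta> t) * EE t + ennreal (4 * L * \<kappa>\<^sup>2 * \<eta> t * Fr hm) \<le> EE (Suc t)"
proof -
  interpret PP: pair_sigma_finite \<rho> \<mu>
    by (simp add: pair_sigma_finite_def P.sigma_finite_measure prob_space_imp_sigma_finite[OF mu_prob])
  let ?G = "\<lambda>\<omega>. gen_err \<rho> \<phi> \<Phi> (ogd \<phi> \<Phi> \<eta> (Suc t) \<omega>)"
  let ?u = "\<lambda>p::('x \<times> real) \<times> (nat \<Rightarrow> 'x \<times> real). fun_upd (snd p) t (fst p)"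
  have um: "?u \<in> measurable (\<rho> \<Otimes>\<^sub>M \<mu>) \<mu>"
    by (rule measurable_fun_upd[where J=UNIV]) auto
  have deq: "distr (\<rho> \<Otimes>\<^sub>M \<mu>) \<mu> ?u = \<mu>"
    using distr_pair_PiM_eq_PiM[of UNIV "\<lambda>_. \<rho>" t] prob by (simp add: split_beta')
  have Gm: "?G \<in> borel_measurable \<mu>" by (rule E_meas)
  have "EE (Suc t) = integral\<^sup>N (distr (\<rho> \<Otimes>\<^sub>M \<mu>) \<mu> ?u) ?G" unfolding EE_def deq ..
  also have "\<dots> = (\<integral>\<^sup>+ p. ?G (?u p) \<partial>(\<rho> \<Otimes>\<^sub>M \<mu>))" by (rule nn_integral_distr[OF um]) (subst deq, rule Gm)
  also have "\<dots> = (\<integral>\<^sup>+ \<omega>. (\<integral>\<^sup>+ z. ?G (?u (z, \<omega>)) \<partial>\<rho>) \<partial>\<mu>)"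
    by (rule PP.nn_integral_snd[symmetric]) (rule measurable_compose[OF um Gm])
  finally have E1: "EE (Suc t) = (\<integral>\<^sup>+ \<omega>. (\<integral>\<^sup>+ z. ?G (fun_upd \<omega> t z) \<partial>\<rho>) \<partial>\<mu>)" by simp
  let ?A = "1 - 4 * L * \<kappa>\<^sup>2 * \<eta> t" and ?b = "4 * L * \<kappa>\<^sup>2 * \<eta> t * Fr hm"
  have A0: "?A \<ge> 0" using eta by simp
  have b0: "?b \<ge> 0" using eta L_pos Fr_nonneg by simp
  have "ennreal ?A * EE t + ennreal ?b = (\<integral>\<^sup>+ \<omega>. ennreal ?A * gen_err \<rho> \<phi> \<Phi> (ogd \<phi> \<Phi> \<eta> t \<omega>) + ennreal ?b \<partial>\<mu>)"
    unfolding EE_def using E_meas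
    by (subst nn_integral_add) (auto simp: nn_integral_cmult prob_space.emeasure_space_1[OF mu_prob])
  also have "\<dots> = (\<integral>\<^sup>+ \<omega>. ennreal (?A * Fr (ogd \<phi> \<Phi> \<eta> t \<omega>) + ?b) \<partial>\<mu>)"
    using A0 b0 Fr_nonneg by (intro nn_integral_cong) (simp add: gen_err_Fr ennreal_plus ennreal_mult)
  also have "\<dots> \<le> (\<integral>\<^sup>+ \<omega>. (\<integral>\<^sup>+ z. ?G (fun_upd \<omega> t z) \<partial>\<rho>) \<partial>\<mu>)"
  proof (rule nn_integral_mono)
    fix \<omega> assume "\<omega> \<in> space \<mu>"
    show "ennreal (?A * Fr (ogd \<phi> \<Phi> \<eta> t \<omega>) + ?b) \<le> (\<integral>\<^sup>+ z. ?G (fun_upd \<omega> t z) \<partial>\<rho>)"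
      unfolding ogd_upd[OF t] by (rule step_lower[OF hmin eta(1)])
  qed
  finally show ?thesis using E1 by simp
qed

lemma EE_lower:
  assumes hmin: "\<forall>h'. Fr hm \<le> Fr h'"
    and eta: "\<forall>t\<ge>1. 0 \<le> \<eta> t \<and> 4 * L * \<kappa>\<^sup>2 * \<eta> t \<le> 1"
  shows "t \<ge> 1 \<Longrightarrow> ennreal (Fr hm + (\<Prod>s\<in>{1..<t}. 1 - 4 * L * \<kappa>\<^sup>2 * \<eta> s) * (Fr 0 - Fr hm)) \<le> EE t"
proof (induction t rule: nat_induct_at_least)
  case base
  have "EE 1 = gen_err \<rho> \<phi> \<Phi> 0" unfolding EE_def by (simp add: prob_space.emeasure_space_1[OF mu_prob])
  then show ?case by (simp add: gen_err_Fr)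
next
  case (Suc t)
  let ?c = "4 * L * \<kappa>\<^sup>2"
  let ?P = "(\<Prod>s\<in>{1..<t}. 1 - ?c * \<eta> s)"
  have t0: "t \<noteq> 0" using Suc by simp
  have et: "0 \<le> \<eta> t" "?c * \<eta> t \<le> 1" using eta Suc by auto
  have P0: "?P \<ge> 0" using eta by (intro prod_nonneg) auto
  have F0: "Fr 0 - Fr hm \<ge> 0" using hmin by simp
  have x0: "Fr hm + ?P * (Fr 0 - Fr hm) \<ge> 0" using P0 F0 Fr_nonneg by simp
  have "ennreal (Fr hm + ?P * (1 - ?c * \<eta> t) * (Fr 0 - Fr hm))
      = ennreal (1 - ?c * \<eta> t) * ennreal (Fr hm + ?P * (Fr 0 - Fr hm)) + ennreal (?c * \<eta> t * Fr hm)"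
  proof -
    have A0: "0 \<le> 1 - ?c * \<eta> t" using et by simp
    have b0: "0 \<le> ?c * \<eta> t * Fr hm" using et L_pos Fr_nonneg by simp
    have "ennreal (1 - ?c * \<eta> t) * ennreal (Fr hm + ?P * (Fr 0 - Fr hm)) + ennreal (?c * \<eta> t * Fr hm)
        = ennreal ((1 - ?c * \<eta> t) * (Fr hm + ?P * (Fr 0 - Fr hm)) + ?c * \<eta> t * Fr hm)"
      using A0 b0 x0 by (simp add: ennreal_mult ennreal_plus mult_nonneg_nonneg)
    also have "(1 - ?c * \<eta> t) * (Fr hm + ?P * (Fr 0 - Fr hm)) + ?c * \<eta> t * Fr hm
        = Fr hm + ?P * (1 - ?c * \<eta> t) * (Fr 0 - Fr hm)" by (simp add: algebra_simps)
    finally show ?thesis by simp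
  qed
  also have "\<dots> \<le> ennreal (1 - ?c * \<eta> t) * EE t + ennreal (?c * \<eta> t * Fr hm)"
    using Suc.IH by (intro add_mono mult_left_mono) auto
  also have "\<dots> \<le> EE (Suc t)" by (rule E_step[OF hmin et t0])
  finally show ?case using Suc.hyps by (simp add: prod.atLeastLessThan_Suc)
qed

lemma exp_bound: "0 \<le> x \<Longrightarrow> x \<le> 2/3 \<Longrightarrow> exp (- 3 * x) \<le> 1 - (x::real)"
proof -
  assume x: "0 \<le> x" "x \<le> 2/3"
  have "1 + 3 * x \<le> exp (3 * x)" by (rule exp_ge_add_one_self)
  then have "exp (- 3 * x) \<le> 1 / (1 + 3 * x)"
    using x by (simp add: exp_minus field_simps)
  also have "\<dots> \<le> 1 - x"
  proof -
    have "x * (3 * x) \<le> x * 2" using x by (intro mult_left_mono) auto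
    then have "1 \<le> (1 - x) * (1 + 3 * x)" by (simp add: algebra_simps)
    then show ?thesis using x by (simp add: field_simps)
  qed
  finally show ?thesis .
qed

lemma final:
  assumes hmin: "\<forall>h'. Fr hm \<le> Fr h'"
    and eta: "\<forall>t\<ge>1. 0 \<le> \<eta> t \<and> \<eta> t * (6 * L * \<kappa>\<^sup>2) \<le> 1"
    and ne: "Fr 0 \<noteq> Fr hm"
    and conv: "EE \<longlonglongrightarrow> ennreal (Fr hm)"
    and summ: "summable (\<lambda>t. \<eta> (Suc t))"
  shows False
proof -
  let ?c = "4 * L * \<kappa>\<^sup>2"
  have c0: "?c > 0" using L_pos kpos by simp
  have ce: "0 \<le> ?c * \<eta> t \<and> ?c * \<eta> t \<le> 2/3" if "t \<ge> 1" for t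
  proof -
    have "\<eta> t * (6 * L * \<kappa>\<^sup>2) \<le> 1" "0 \<le> \<eta> t" using eta that by auto
    moreover have "0 \<le> ?c * \<eta> t" using c0 \<open>0 \<le> \<eta> t\<close> by simp
    ultimately show ?thesis by (auto simp: field_simps)
  qed
  have eta': "\<forall>t\<ge>1. 0 \<le> \<eta> t \<and> ?c * \<eta> t \<le> 1" proof (intro allI impI conjI)
    fix t :: nat assume "1 \<le> t"
    then show "0 \<le> \<eta> t" using eta by auto
    show "?c * \<eta> t \<le> 1" using ce[OF \<open>1 \<le> t\<close>] by linarith
  qed
  define S where "S = suminf (\<lambda>t. \<eta> (Suc t))"
  define p where "p = exp (- 3 * ?c * S)"
  have p0: "p > 0" unfolding p_def by simp
  have Pp: "p \<le> (\<Prod>s\<in>{1..<t}. 1 - ?c * \<eta> s)" if "t \<ge> 1" for t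
  proof -
    have "sum \<eta> {1..<t} = (\<Sum>i<t-1. \<eta> (Suc i))"
      using that by (metis One_nat_def Suc_diff_1 atLeast0LessThan less_eq_Suc_le sum.shift_bounds_Suc_ivl)
    also have "\<dots> \<le> S" unfolding S_def
      by (rule sum_le_suminf[OF summ]) (use eta in auto)
    finally have sS: "sum \<eta> {1..<t} \<le> S" .
    have "p \<le> exp (- 3 * ?c * sum \<eta> {1..<t})"
    proof -
      have "?c * sum \<eta> {1..<t} \<le> ?c * S" using sS c0 by (intro mult_left_mono) auto
      then show ?thesis unfolding p_def by simp
    qed
    also have "\<dots> = (\<Prod>s\<in>{1..<t}. exp (- 3 * (?c * \<eta> s)))"
      by (simp add: exp_sum[symmetric] sum_distrib_left mult.assoc)
    also have "\<dots> \<le> (\<Prod>s\<in>{1..<t}. 1 - ?c * \<eta> s)"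
      by (intro prod_mono conjI exp_bound) (use ce in auto)
    finally show ?thesis .
  qed
  have F0: "Fr 0 - Fr hm > 0" using hmin ne by (metis diff_gt_0_iff_gt order_le_imp_less_or_eq)
  have "ennreal (Fr hm + p * (Fr 0 - Fr hm)) \<le> ennreal (Fr hm)"
  proof (rule LIMSEQ_le_const[OF conv], intro exI allI impI)
    fix t :: nat assume t: "1 \<le> t"
    have "ennreal (Fr hm + p * (Fr 0 - Fr hm)) \<le> ennreal (Fr hm + (\<Prod>s\<in>{1..<t}. 1 - ?c * \<eta> s) * (Fr 0 - Fr hm))"
      using Pp[OF t] F0 by (intro ennreal_leI add_left_mono mult_right_mono) auto
    also have "\<dots> \<le> EE t" by (rule EE_lower[OF hmin eta' t])
    finally show "ennreal (Fr hm + p * (Fr 0 - Fr hm)) \<le> EE t" .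
  qed
  then have "Fr hm + p * (Fr 0 - Fr hm) \<le> Fr hm" using Fr_nonneg by (simp add: ennreal_le_iff)
  then show False using p0 F0 by (smt (verit) mult_pos_pos)
qed

end



lemma feature_cont:
  fixes \<Phi> :: "'x::topological_space \<Rightarrow> 'h::real_inner"
  assumes KF: "\<forall>x\<in>X. \<forall>x'\<in>X. K x x' = inner (\<Phi> x) (\<Phi> x')"
    and KC: "continuous_on (X \<times> X) (\<lambda>(x, x'). K x x')"
  shows "continuous_on X \<Phi>"
  unfolding continuous_on_def
proof
  fix x0 assume x0: "x0 \<in> X"
  let ?q = "\<lambda>x. K x x - 2 * K x x0 + K x0 x0"
  have kk: "continuous_on X (\<lambda>x. K x x)"
  proof -
    have "continuous_on X ((\<lambda>(x, x'). K x x') \<circ> (\<lambda>x. (x, x)))"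
      by (rule continuous_on_compose[OF continuous_on_Pair[OF continuous_on_id continuous_on_id] continuous_on_subset[OF KC]]) auto
    then show ?thesis by (simp add: o_def)
  qed
  have kx: "continuous_on X (\<lambda>x. K x x0)"
  proof -
    have "continuous_on X ((\<lambda>(x, x'). K x x') \<circ> (\<lambda>x. (x, x0)))"
      by (rule continuous_on_compose[OF continuous_on_Pair[OF continuous_on_id continuous_on_const] continuous_on_subset[OF KC]]) (use x0 in auto)
    then show ?thesis by (simp add: o_def)
  qed
  have "continuous_on X ?q" by (intro continuous_on_add continuous_on_diff continuous_on_mult kk kx continuous_on_const)
  then have "(?q \<longlongrightarrow> ?q x0) (at x0 within X)" using x0 unfolding continuous_on_def by blast
  moreover have "?q x0 = 0" by simp
  ultimately have "((\<lambda>x. sqrt (?q x)) \<longlongrightarrow> sqrt 0) (at x0 within X)" by (intro tendsto_intros) simp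
  then have "((\<lambda>x. sqrt (?q x)) \<longlongrightarrow> 0) (at x0 within X)" by simp
  moreover have "eventually (\<lambda>x. sqrt (?q x) = norm (\<Phi> x - \<Phi> x0)) (at x0 within X)"
  proof -
    have "sqrt (?q x) = norm (\<Phi> x - \<Phi> x0)" if "x \<in> X" for x
      using KF that x0 by (simp add: norm_eq_sqrt_inner inner_diff inner_commute)
    then show ?thesis by (auto simp: eventually_at_filter)
  qed
  ultimately have "((\<lambda>x. norm (\<Phi> x - \<Phi> x0)) \<longlongrightarrow> 0) (at x0 within X)" using tendsto_cong by force
  then have "((\<lambda>x. \<Phi> x - \<Phi> x0) \<longlongrightarrow> 0) (at x0 within X)" by (simp add: tendsto_norm_zero_iff)
  then show "(\<Phi> \<longlongrightarrow> \<Phi> x0) (at x0 within X)" by (simp add: Lim_null[symmetric])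
qed

theorem theorem2:
  fixes X :: "(real ^ 'd) set" and Y :: "real set"
    and \<rho> :: "((real ^ 'd) \<times> real) measure"
    and K :: "real ^ 'd \<Rightarrow> real ^ 'd \<Rightarrow> real"
    and \<Phi> :: "real ^ 'd \<Rightarrow> 'h::{real_inner, complete_space}"
    and \<phi> :: "real \<Rightarrow> real \<Rightarrow> real"
    and \<eta> :: "nat \<Rightarrow> real" and L :: real and hH :: 'h
  assumes rho_prob: "prob_space \<rho>"
    and rho_space: "space \<rho> = X \<times> Y"
    and rho_sets: "sets \<rho> = sets (restrict_space borel (X \<times> Y))"
    and K_feature: "\<forall>x\<in>X. \<forall>x'\<in>X. K x x' = inner (\<Phi> x) (\<Phi> x')"
    and Phi_dense: "closure (span (\<Phi> ` X)) = UNIV"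
    and K_cont: "continuous_on (X \<times> X) (\<lambda>(x, x'). K x x')"
    and kappa_fin: "bdd_above ((\<lambda>x. sqrt (K x x)) ` X)"
    and phi_meas: "(\<lambda>(y, s). \<phi> y s) \<in> borel_measurable borel"
    and phi_nonneg: "\<forall>y\<in>Y. \<forall>s. 0 \<le> \<phi> y s"
    and phi_diff: "\<forall>y\<in>Y. \<forall>s. \<phi> y differentiable (at s)"
    and phi_convex: "\<forall>y\<in>Y. convex_on UNIV (\<phi> y)"
    and L_pos: "L > 0"
    and phi_lip: "\<forall>y\<in>Y. \<forall>s s'. \<bar>deriv (\<phi> y) s - deriv (\<phi> y) s'\<bar> \<le> L * \<bar>s - s'\<bar>"
    and hH_min: "\<forall>h. gen_err \<rho> \<phi> \<Phi> hH \<le> gen_err \<rho> \<phi> \<Phi> h"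
    and phi_bdd: "\<exists>B. (\<forall>y\<in>Y. \<phi> y 0 \<le> B) \<and> (\<forall>x\<in>X. \<forall>y\<in>Y. \<phi> y (inner hH (\<Phi> x)) \<le> B)"
    and eta_pos: "\<forall>t\<ge>1. \<eta> t > 0"
    and eta_le: "\<forall>t\<ge>1. \<eta> t * (6 * L * (SUP x\<in>X. sqrt (K x x))\<^sup>2) \<le> 1"
    and err_ne: "gen_err \<rho> \<phi> \<Phi> 0 \<noteq> gen_err \<rho> \<phi> \<Phi> hH"
    and conv: "(\<lambda>t. \<integral>\<^sup>+ \<omega>. gen_err \<rho> \<phi> \<Phi> (ogd \<phi> \<Phi> \<eta> t \<omega>) \<partial>(PiM UNIV (\<lambda>_::nat. \<rho>)))
               \<longlonglongrightarrow> gen_err \<rho> \<phi> \<Phi> hH"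
  shows "\<not> summable (\<lambda>t. \<eta> (Suc t))"
proof
  assume summ: "summable (\<lambda>t. \<eta> (Suc t))"
  define \<kappa> where "\<kappa> = (SUP x\<in>X. sqrt (K x x))"
  obtain B where B: "\<forall>y\<in>Y. \<phi> y 0 \<le> B" using phi_bdd by blast
  have Pc: "continuous_on X \<Phi>" by (rule feature_cont[OF K_feature K_cont])
  have Pb: "\<forall>x\<in>X. norm (\<Phi> x) \<le> \<kappa>"
  proof
    fix x assume x: "x \<in> X"
    have "norm (\<Phi> x) = sqrt (K x x)" using K_feature x by (simp add: norm_eq_sqrt_inner)
    also have "\<dots> \<le> \<kappa>" unfolding \<kappa>_def by (rule cSUP_upper[OF x kappa_fin])
    finally show "norm (\<Phi> x) \<le> \<kappa>" .
  qed
  have kpos: "\<kappa> > 0"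
  proof (rule ccontr)
    assume "\<not> \<kappa> > 0"
    then have "\<forall>x\<in>X. \<Phi> x = 0" using Pb by (metis norm_le_zero_iff order_trans not_less)
    then have "\<Phi> ` X \<subseteq> {0}" by auto
    then have "span (\<Phi> ` X) \<subseteq> {0}" by (metis span_mono span_empty span_insert_0 )
    then have "closure (span (\<Phi> ` X)) \<subseteq> {0}" by (metis closure_minimal closed_singleton)
    then have "hH = 0" using Phi_dense by auto
    then show False using err_ne by simp
  qed
  interpret S: setting2 X Y \<rho> \<Phi> \<phi> L \<kappa> B \<eta>
    using setting.intro[OF rho_prob rho_space rho_sets Pc Pb kpos phi_meas phi_nonneg phi_diff phi_convex L_pos phi_lip B]
    by intro_locales
  have hmin: "\<forall>h'. S.Fr hH \<le> S.Fr h'"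
    using hH_min S.Fr_nonneg by (simp add: S.gen_err_Fr ennreal_le_iff)
  have ne: "S.Fr 0 \<noteq> S.Fr hH" using err_ne S.gen_err_Fr by metis
  have conv': "S.EE \<longlonglongrightarrow> ennreal (S.Fr hH)"
    using conv unfolding S.EE_def[abs_def] by (simp add: S.gen_err_Fr)
  have eta: "\<forall>t\<ge>1. 0 \<le> \<eta> t \<and> \<eta> t * (6 * L * \<kappa>\<^sup>2) \<le> 1"
    using eta_pos eta_le unfolding \<kappa>_def by (auto intro: less_imp_le)
  show False by (rule S.final[OF hmin eta ne conv' summ])
qed


end
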